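(* Let $q$ be a prime power and let $\Gamma$ be the set of roots in $\mathbb{F}_{q^3}$ of $X^{q^2}+X^q+X$. Then the polynomial $(X^q-X)\circ X^3=X^{3q}-X^3$ permutes $\Gamma$ (i.e. maps $\Gamma$ bijectively onto $\Gamma$) if and only if $q\equiv 2\pmod 3$. *)

theory Defs
  imports "HOL-Number_Theory.Number_Theory"
begin

end

theory Submission
  imports Defs "HOL-Computational_Algebra.Computational_Algebra"
begin

lemma ff_fermat:
  fixes x :: "'a :: {field,finite}"
  shows "x ^ card (UNIV :: 'a set) = x"
proof (cases "x = 0")
  case False
  have "x * (\<Prod>y\<in>UNIV-{0}. x * y) = x * x ^ (card (UNIV :: 'a set) - 1) * \<Prod>(UNIV-{0})"
    by (simp add: prod.distrib mult_ac)
  also have "x * x ^ (card (UNIV :: 'a set) - 1) = x ^ Suc (card (UNIV :: 'a set) - 1)"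
    by (subst power_Suc) auto
  also have "Suc (card (UNIV :: 'a set) - 1) = card (UNIV :: 'a set)"
    using finite_UNIV_card_ge_0[where ?'a = 'a] by simp
  also have "(\<Prod>y\<in>UNIV-{0}. x * y) = (\<Prod>y\<in>UNIV-{0}. y)"
    by (rule prod.reindex_bij_witness[of _ "\<lambda>y. y / x" "\<lambda>y. x * y"]) (use False in auto)
  finally show ?thesis
    by simp
qed (use finite_UNIV_card_ge_0[where ?'a = 'a] in auto)

lemma ff_card_zero:
  "of_nat (card (UNIV :: 'a :: {field,finite} set)) = (0::'a)"
proof -
  have "(\<Sum>x\<in>(UNIV::'a set). x + 1) = (\<Sum>x\<in>UNIV. x)"
    by (rule sum.reindex_bij_witness[of _ "\<lambda>y. y - 1" "\<lambda>y. y + 1"]) auto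
  then show ?thesis by (simp add: sum.distrib)
qed

lemma ff_char:
  assumes "primepow q" and "card (UNIV :: 'a :: {field,finite} set) = q ^ 3"
  shows "\<exists>p k. prime p \<and> k > 0 \<and> q = p ^ k \<and> CHAR('a) = p"
proof -
  obtain p k where pk: "prime p" "k > 0" "q = p ^ k" using assms(1) unfolding primepow_def by blast
  have cp: "prime CHAR('a)"
    by (rule prime_CHAR_semidom, rule finite_imp_CHAR_pos) simp
  have "CHAR('a) dvd card (UNIV :: 'a set)"
    using ff_card_zero[where 'a='a] of_nat_eq_0_iff_char_dvd by blast
  then have "CHAR('a) dvd p ^ (k*3)" using assms(2) pk by (simp add: power_mult)
  then have "CHAR('a) dvd p" using cp prime_dvd_power by blast
  then have "CHAR('a) = p" using cp pk(1) primes_dvd_imp_eq by blast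
  then show ?thesis using pk by blast
qed

lemma ff_frob:
  assumes "primepow q" and "card (UNIV :: 'a :: {field,finite} set) = q ^ 3"
  shows "(x + y :: 'a) ^ q = x ^ q + y ^ q"
proof -
  obtain p k where pk: "prime p" "k > 0" "q = p ^ k" "CHAR('a) = p"
    using ff_char[OF assms] by blast
  show ?thesis by (rule freshmans_dream'[where n=k]) (use pk in auto)
qed


lemma root_count:
  fixes c :: "'a :: {field,finite}"
  assumes "m < n"
  shows "card {x::'a. x ^ n = c * x ^ m} \<le> n"
proof -
  let ?p = "monom (1::'a) n - monom c m"
  have "coeff ?p n = 1" using assms by (simp add: coeff_monom)
  then have nz: "?p \<noteq> 0"
  proof (intro notI)
    assume "?p = 0" "coeff ?p n = 1"
    then show False by simp
  qed
  have "degree ?p \<le> n"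
    by (rule degree_diff_le) (use assms in \<open>auto intro: order.trans[OF degree_monom_le]\<close>)
  moreover have "{x::'a. x ^ n = c * x ^ m} = {x. poly ?p x = 0}"
    by (auto simp: poly_monom)
  ultimately show ?thesis using card_poly_roots_bound[OF nz] by simp
qed

locale ffq =
  fixes q :: nat and ty :: "'a::{field,finite} itself"
  assumes frob: "\<And>x y::'a. (x+y)^q = x^q + y^q"
  and cardq: "card (UNIV :: 'a set) = q ^ 3"
  and q1: "q > 1"
begin

lemma ferm: "(x::'a) ^ (q^3) = x"
  using ff_fermat[of x] cardq by simp

lemma neg: "(-(x::'a))^q = - (x^q)"
proof -
  have "(-x)^q + x^q = 0" using frob[of "-x" x] q1 by (simp add: power_0_left)
  then show ?thesis by (simp add: eq_neg_iff_add_eq_0)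
qed

lemma diff: "((x::'a) - y)^q = x^q - y^q"
  using frob[of x "-y"] neg[of y] by simp

lemma pq2: "(x::'a)^(q^2) = (x^q)^q"
  by (simp add: power2_eq_square power_mult)

lemma pq3: "(x::'a)^(q^3) = ((x^q)^q)^q"
  by (simp add: power3_eq_cube power_mult)

lemma pcomm: "((x::'a)^m)^n = (x^n)^m"
  by (simp add: power_mult[symmetric] mult.commute)

lemma image_in:
  "((y::'a)^q - y)^(q^2) + (y^q - y)^q + (y^q - y) = 0"
  using ferm[of y] by (simp add: pq2 pq3 diff)


definition Gam :: "'a set" where "Gam = {x::'a. x ^ (q ^ 2) + x ^ q + x = 0}"

lemma GamD: "x \<in> Gam \<Longrightarrow> (x^q)^q = - x - x^q"
  unfolding Gam_def by (auto simp: pq2 eq_neg_iff_add_eq_0 algebra_simps)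

lemma cube_inj:
  assumes "q mod 3 = 2" "(a::'a)^3 = b^3"
  shows "a = b"
proof -
  obtain m where m: "q^3 = 3*m + 2"
  proof -
    have "q^3 mod 3 = 2" using assms(1) by (simp add: power_mod[symmetric])
    then show ?thesis using that by (metis mod_div_mult_eq add.commute mult.commute)
  qed
  have key: "(z::'a) = (z^3)^(2*m+1)" for z
  proof (cases "z = 0")
    case True then show ?thesis by simp
  next
    case False
    have "z^2 = (z^(q^3))^2" using ferm by simp
    also have "\<dots> = z^((3*m+2)*2)" by (simp only: m power_mult)
    also have "(3*m+2)*2 = Suc (6*m+3)" by simp
    also have "z^(Suc (6*m+3)) = z^(6*m+3) * z" by (rule power_Suc2)
    finally have "z * z = z^(6*m+3) * z" unfolding power2_eq_square .
    then have zz: "z^(6*m+3) = z" by (metis False mult_right_cancel)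
    have "(z^3)^(2*m+1) = z^(3*(2*m+1))" by (simp only: power_mult)
    also have "3*(2*m+1) = 6*m+3" by simp
    finally show ?thesis using zz by simp
  qed
  show ?thesis using key[of a] key[of b] assms(2) by simp
qed

lemma L0:
  assumes "q mod 3 = 2" "(3::'a) \<noteq> 0" "z \<in> Gam" "(z^3)^q = z^3"
  shows "z = 0"
proof -
  have "(z^q)^3 = z^3" using assms(4) pcomm by metis
  then have zq: "z^q = z" using cube_inj assms(1) by blast
  have "z + z + z = 0" using GamD[OF assms(3)] zq by simp
  then have "3 * z = 0" by (simp add: algebra_simps)
  then show ?thesis using assms(2) by simp
qed


lemma sym_q:
  assumes "x \<in> Gam"
  shows "(-(x*x + x*x^q + x^q*x^q))^q = -(x*x + x*x^q + x^q*x^q)"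
    and "(-(x*x^q*(x+x^q)))^q = -(x*x^q*(x+x^q))"
    and "x^3 = -(x*x^q*(x+x^q)) - (-(x*x + x*x^q + x^q*x^q)) * x"
proof -
  note h = GamD[OF assms]
  have "(-(x*x + x*x^q + x^q*x^q))^q = -((x^q)*(x^q) + (x^q)*((x^q)^q) + ((x^q)^q)*((x^q)^q))"
    by (simp only: neg frob power_mult_distrib)
  also have "\<dots> = -(x*x + x*x^q + x^q*x^q)" unfolding h by (simp add: algebra_simps)
  finally show "(-(x*x + x*x^q + x^q*x^q))^q = -(x*x + x*x^q + x^q*x^q)" .
  have "(-(x*x^q*(x+x^q)))^q = -((x^q)*((x^q)^q)*((x^q)+((x^q)^q)))"
    by (simp only: neg frob power_mult_distrib)
  also have "\<dots> = -(x*x^q*(x+x^q))" unfolding h by (simp add: algebra_simps)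
  finally show "(-(x*x^q*(x+x^q)))^q = -(x*x^q*(x+x^q))" .
  show "x^3 = -(x*x^q*(x+x^q)) - (-(x*x + x*x^q + x^q*x^q)) * x"
    by (simp add: algebra_simps power3_eq_cube)
qed


lemma f_into: "(x::'a)^(3*q) - x^3 \<in> Gam"
  using image_in[of "x^3"] unfolding Gam_def by (simp add: power_mult)

lemma inj2:
  assumes q2: "q mod 3 = 2" and three: "(3::'a) \<noteq> 0"
  shows "inj_on (\<lambda>x::'a. x^(3*q) - x^3) Gam"
proof (rule inj_onI)
  fix x y :: 'a
  assume x: "x \<in> Gam" and y: "y \<in> Gam" and e: "x^(3*q) - x^3 = y^(3*q) - y^3"
  define s where "s = -(x*x + x*x^q + x^q*x^q)"
  define n where "n = -(x*x^q*(x+x^q))"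
  define s' where "s' = -(y*y + y*y^q + y^q*y^q)"
  define n' where "n' = -(y*y^q*(y+y^q))"
  have sq: "s^q = s" "n^q = n" "x^3 = n - s*x"
    unfolding s_def n_def by (rule sym_q[OF x])+
  have sq': "s'^q = s'" "n'^q = n'" "y^3 = n' - s'*y"
    unfolding s'_def n'_def by (rule sym_q[OF y])+
  define c where "c = x^3 - y^3"
  have E: "(x^3)^q - x^3 = (y^3)^q - y^3" using e by (simp add: power_mult)
  have "c^q = (x^3)^q - (y^3)^q" by (simp add: c_def diff)
  also have "\<dots> = c" using E unfolding c_def by (simp add: algebra_simps eq_diff_eq diff_eq_eq)
  finally have cq: "c^q = c" .
  define u where "u = s*x - s'*y"
  have u1: "u = (n - n') - c" using sq(3) sq'(3) unfolding u_def c_def by (simp add: algebra_simps)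
  have uq: "u^q = u" unfolding u1 by (simp add: diff sq sq' cq)
  have uq2: "u^q = s*x^q - s'*y^q" by (simp add: u_def diff power_mult_distrib sq sq')
  have uq3: "(u^q)^q = s*(-x-x^q) - s'*(-y-y^q)"
    unfolding uq2 by (simp add: diff power_mult_distrib sq sq' GamD[OF x] GamD[OF y])
  have "u + u^q + (u^q)^q = 0" by (subst uq3, subst uq2) (simp add: u_def algebra_simps)
  then have A3: "u + u + u = 0" unfolding uq .
  have B3: "(3::'a) * u = u + u + u"
  proof -
    have t: "(3::'a) = 1 + 1 + 1" by simp
    show ?thesis by (simp only: t distrib_right mult_1_left)
  qed
  from B3 A3 have "3 * u = 0" by (rule trans)
  then have "u = 0" using three by simp
  then have sxy: "s*x = s'*y" unfolding u_def by simp
  show "x = y"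
  proof (cases "s = 0")
    case True
    then have "s'*y = 0" using sxy by simp
    then consider "y = 0" | "s' = 0" by auto
    then show ?thesis
    proof cases
      case 1
      then have "(x^3)^q = x^3" using cq by (simp add: c_def)
      then have "x = 0" using L0[OF q2 three x] by simp
      then show ?thesis using 1 by simp
    next
      case 2
      have "(x^3)^q = x^3" using sq True by simp
      then have "x = 0" using L0[OF q2 three x] by simp
      moreover have "(y^3)^q = y^3" using sq' 2 by simp
      then have "y = 0" using L0[OF q2 three y] by simp
      ultimately show ?thesis by simp
    qed
  next
    case False
    define l where "l = s'/s"
    have xl: "x = l*y" using sxy False by (simp add: l_def field_simps)
    have lq: "l^q = l" by (simp add: l_def power_divide sq sq')
    show ?thesis
    proof (cases "l^3 = 1")
      case True
      then have "l^3 = 1^3" by simp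
      then have "l = 1" using cube_inj[OF q2] by blast
      then show ?thesis using xl by simp
    next
      case False
      have cy: "c = (l^3 - 1) * y^3" by (simp add: c_def xl power_mult_distrib algebra_simps)
      have nz: "l^3 - 1 \<noteq> 0" using False by simp
      have y3: "y^3 = c / (l^3-1)" using nz cy by (simp add: field_simps)
      have "(l^3 - 1)^q = (l^q)^3 - 1" using q1 by (simp add: diff pcomm[of l 3 q])
      also have "\<dots> = l^3 - 1" using lq by simp
      finally have lq3: "(l^3 - 1)^q = l^3 - 1" .
      have "(y^3)^q = y^3" unfolding y3 by (simp add: power_divide lq3 cq)
      then have "y = 0" using L0[OF q2 three y] by simp
      then show ?thesis using xl by simp
    qed
  qed
qed


lemma not_inj0:
  assumes three: "(3::'a) = 0"
  shows "\<not> inj_on (\<lambda>x::'a. x^(3*q) - x^3) Gam"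
proof
  assume inj: "inj_on (\<lambda>x::'a. x^(3*q) - x^3) Gam"
  have t: "(1::'a) + 1 + 1 = 3" by simp
  have g1: "(1::'a) \<in> Gam" unfolding Gam_def using three t by simp
  have g0: "(0::'a) \<in> Gam" unfolding Gam_def using q1 by (simp add: power_0_left)
  have "(1::'a)^(3*q) - 1^3 = 0^(3*q) - 0^3" using q1 by simp
  then have "(1::'a) = 0" using inj_onD[OF inj _ g1 g0] by blast
  then show False by simp
qed

lemma not_inj1:
  assumes q1m: "q mod 3 = 1"
  shows "\<not> inj_on (\<lambda>x::'a. x^(3*q) - x^3) Gam"
proof
  assume inj: "inj_on (\<lambda>x::'a. x^(3*q) - x^3) Gam"
  have qq: "q < q^3" using power_strict_increasing_iff[of q 1 3] q1 by simp
  have c1: "card {x::'a. x^q = 1 * x^1} \<le> q" by (rule root_count) (use q1 in simp)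
  obtain z :: 'a where z: "z^q \<noteq> z"
  proof (rule ccontr)
    assume "\<not> thesis"
    with that have "{x::'a. x^q = 1 * x^1} = UNIV" by auto
    then show False using c1 qq cardq by simp
  qed
  define x0 where "x0 = z^q - z"
  have x0nz: "x0 \<noteq> 0" using z by (simp add: x0_def)
  have x0G: "x0 \<in> Gam" unfolding Gam_def x0_def using image_in[of z] by simp
  have q3m: "q^3 mod 3 = 1" using q1m by (simp add: power_mod[symmetric])
  define M where "M = q^3 div 3"
  have M3: "q^3 = 3*M + 1" using q3m unfolding M_def by (metis mod_div_mult_eq add.commute mult.commute)
  have Mpos: "M > 0" using qq q1 M3 by (cases "M = 0") auto
  have c2: "card {x::'a. x^M = 1 * x^0} \<le> M" by (rule root_count) (use Mpos in simp)
  have c3: "card (insert 0 {x::'a. x^M = 1 * x^0}) \<le> M + 1"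
    using c2 card_insert_le_m1 by (metis (no_types) Suc_eq_plus1 card_insert_if finite le_SucI Suc_le_mono)
  obtain a :: 'a where a: "a \<noteq> 0" "a^M \<noteq> 1"
  proof (rule ccontr)
    assume "\<not> thesis"
    with that have "insert 0 {x::'a. x^M = 1 * x^0} = UNIV" by auto
    then show False using c3 M3 Mpos cardq by simp
  qed
  define w where "w = a^M"
  have w1: "w \<noteq> 1" using a by (simp add: w_def)
  have "a^(3*M) * a = a * 1" using ferm[of a] M3 by (simp add: power_add mult.commute)
  then have "a^(3*M) = 1" using a(1) by (metis mult.commute mult_left_cancel)
  then have w3: "w^3 = 1" by (simp add: w_def power_mult[symmetric] mult.commute)
  obtain j where j: "q = 3*j + 1" using q1m by (metis mod_div_mult_eq add.commute mult.commute)
  have wq: "w^q = w" by (simp add: j power_add power_mult w3)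
  have wx0: "w*x0 \<in> Gam" using x0G unfolding Gam_def
    by (simp add: power_mult_distrib pq2 wq) (metis distrib_left mult_zero_right)
  have "(w*x0)^(3*q) - (w*x0)^3 = x0^(3*q) - x0^3"
    by (simp add: power_mult_distrib w3 power_mult)
  then have "w*x0 = x0" using inj_onD[OF inj _ wx0 x0G] by blast
  then have "(w - 1) * x0 = 0" by (simp add: algebra_simps)
  then show False using w1 x0nz by simp
qed

end

theorem theorem1p7:
  fixes q :: nat
    and Gamma :: "'a::{field,finite} set"
  defines "Gamma \<equiv> {x::'a. x ^ (q ^ 2) + x ^ q + x = 0}"
  assumes "primepow q"
    and "card (UNIV :: 'a set) = q ^ 3"
  shows "bij_betw (\<lambda>x::'a. x ^ (3 * q) - x ^ 3)
           Gamma Gamma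
         \<longleftrightarrow> q mod 3 = 2"
proof -
  obtain p k where pk: "prime p" "k > 0" "q = p ^ k" "CHAR('a) = p"
    using ff_char[OF assms(2,3)] by blast
  have q1: "q > 1" using pk prime_gt_1_nat one_less_power by metis
  interpret ffq q "TYPE('a)"
    by unfold_locales (use ff_frob[OF assms(2,3)] assms(3) q1 in auto)
  have GG: "Gamma = Gam" unfolding Gamma_def Gam_def ..
  have into: "(\<lambda>x::'a. x^(3*q) - x^3) ` Gam \<subseteq> Gam" using f_into by auto
  have char3: "(3::'a) = 0 \<longleftrightarrow> p = 3"
  proof -
    have "(3::'a) = of_nat 3" by simp
    then have "(3::'a) = 0 \<longleftrightarrow> p dvd 3" using of_nat_eq_0_iff_char_dvd pk(4) by metis
    also have "\<dots> \<longleftrightarrow> p = 3" using pk(1) primes_dvd_imp_eq[of p 3] by auto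
    finally show ?thesis .
  qed
  have q0: "q mod 3 = 0 \<longleftrightarrow> p = 3"
  proof
    assume "q mod 3 = 0"
    then have "3 dvd p^k" using pk by auto
    then have "(3::nat) dvd p" using prime_dvd_power[of 3 p k] by simp
    then show "p = 3" using pk(1) primes_dvd_imp_eq[of 3 p] by simp
  next
    assume "p = 3" then show "q mod 3 = 0" using pk by simp
  qed
  show ?thesis
  proof (cases "q mod 3 = 2")
    case True
    have "(3::'a) \<noteq> 0" using char3 q0 True by simp
    then have inj: "inj_on (\<lambda>x::'a. x^(3*q) - x^3) Gam" using inj2 True by blast
    then have "(\<lambda>x::'a. x^(3*q) - x^3) ` Gam = Gam" using endo_inj_surj[OF _ into inj] by simp
    then show ?thesis using True inj unfolding GG bij_betw_def by simp
  next
    case False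
    then consider "q mod 3 = 0" | "q mod 3 = 1" by linarith
    then have "\<not> inj_on (\<lambda>x::'a. x^(3*q) - x^3) Gam"
    proof cases
      case 1 then show ?thesis using not_inj0 char3 q0 by simp
    next
      case 2 then show ?thesis using not_inj1 by simp
    qed
    then show ?thesis using False unfolding GG bij_betw_def by simp
  qed
qed

end
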